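(* Let $A$ be a finite set of relatively prime positive integers. Then $\mathrm{Geo}(A)\le \mathrm{Add}(A)$.
   Context: $\mathbb{N}$ denotes the set of positive integers; $K-K=\{x-y : x,y\in K\}$. A set of integers is relatively prime if it is nonempty and its elements have no common factor greater than $1$. An $\mathcal{N}$-set in $\mathbb{R}$ is a compact set $K\subseteq\mathbb{R}$ such that for every $x\in\mathbb{R}$ there exists $y\in K$ with $x-y\in\mathbb{Z}$. A representation of $1$ by elements of $A$ consists of pairwise distinct $a_1,\ldots,a_h\in A$, positive integers $w_1,\ldots,w_h$ and signs $\varepsilon_1,\ldots,\varepsilon_h\in\{1,-1\}$ with $\sum_{i=1}^h\varepsilon_i w_i a_i=1$; its weight is $\sum_{i=1}^h w_i+\operatorname{card}(A)-h$. The additive weight $\mathrm{Add}(A)$ is the smallest weight of a representation of $1$ by elements of $A$. The weight of an $\mathcal{N}$-set is its number of connected components, and the geometric weight $\mathrm{Geo}(A)$ is the smallest weight of an $\mathcal{N}$-set $K$ with $A=(K-K)\cap\mathbb{N}$. *)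

theory Defs
  imports "HOL-Analysis.Analysis" "HOL-Library.Extended_Nat"
begin

definition rel_prime_set :: "nat set \<Rightarrow> bool" where
  "rel_prime_set A \<longleftrightarrow> A \<noteq> {} \<and> Gcd A = 1"

definition is_rep :: "nat set \<Rightarrow> nat set \<Rightarrow> (nat \<Rightarrow> nat) \<Rightarrow> (nat \<Rightarrow> int) \<Rightarrow> bool" where
  "is_rep A S w e \<longleftrightarrow> S \<subseteq> A \<and> finite S \<and> (\<forall>a\<in>S. w a \<ge> 1 \<and> e a \<in> {1, -1})
     \<and> (\<Sum>a\<in>S. e a * int (w a) * int a) = 1"

definition rep_weight :: "nat set \<Rightarrow> nat set \<Rightarrow> (nat \<Rightarrow> nat) \<Rightarrow> nat" where
  "rep_weight A S w = (\<Sum>a\<in>S. w a) + card A - card S"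

definition Add :: "nat set \<Rightarrow> enat" where
  "Add A = (INF p \<in> {(S, w, e). is_rep A S w e}. enat (rep_weight A (fst p) (fst (snd p))))"

definition N_set :: "real set \<Rightarrow> bool" where
  "N_set K \<longleftrightarrow> compact K \<and> (\<forall>x. \<exists>y\<in>K. x - y \<in> \<int>)"

definition nset_weight :: "real set \<Rightarrow> enat" where
  "nset_weight K = (if finite (components K) then enat (card (components K)) else \<infinity>)"

definition pos_diffs :: "real set \<Rightarrow> nat set" where
  "pos_diffs K = {n. n > 0 \<and> (\<exists>x\<in>K. \<exists>y\<in>K. x - y = real n)}"

definition Geo :: "nat set \<Rightarrow> enat" where
  "Geo A = (INF K \<in> {K. N_set K \<and> A = pos_diffs K}. nset_weight K)"

end

theory Submission
  imports Defs
begin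

lemma components_card_le:
  fixes K :: "real set"
  assumes "finite F" "\<And>C. C \<in> F \<Longrightarrow> connected C \<and> C \<noteq> {}" "K = \<Union>F"
  shows "finite (components K) \<and> card (components K) \<le> card F"
proof -
  define g where "g C = connected_component_set K (SOME y. y \<in> C)" for C
  have "components K \<subseteq> g ` F"
  proof
    fix D assume "D \<in> components K"
    then obtain x where x: "x \<in> K" "D = connected_component_set K x"
      by (auto simp: components_def)
    then obtain C where C: "C \<in> F" "x \<in> C" using assms(3) by blast
    have sub: "C \<subseteq> connected_component_set K x"
      using connected_component_maximal[of x C K] C assms by blast
    have "(SOME y. y \<in> C) \<in> C" using C by (meson someI)
    then have "connected_component_set K (SOME y. y \<in> C) = connected_component_set K x"
      using sub connected_component_eq by blast
    then show "D \<in> g ` F" using x C g_def by auto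
  qed
  then show ?thesis
    by (meson assms(1) card_image_le finite_imageI finite_subset card_mono order_trans)
qed

definition pc :: "int list \<Rightarrow> nat \<Rightarrow> int" where
  "pc ts k = - sum_list (take k ts)"

definition piece :: "int list \<Rightarrow> nat \<Rightarrow> real set" where
  "piece ts k = (\<lambda>x. x + of_int (pc ts k)) ` {real k / real (length ts) .. real (Suc k) / real (length ts)}"

lemma pc_step: "k < length ts \<Longrightarrow> pc ts k - pc ts (Suc k) = ts ! k"
  by (simp add: pc_def take_Suc_conv_app_nth)

lemma pc_last: assumes "sum_list ts = 1" "length ts = Suc m"
  shows "1 + pc ts m = ts ! m"
proof -
  have "ts = take m ts @ [ts ! m]" using assms(2)
    by (metis lessI take_Suc_conv_app_nth take_all_iff order_refl)
  then have "sum_list ts = sum_list (take m ts) + ts ! m"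
    by (metis sum_list_append sum_list_simps add_0_right)
  then show ?thesis using assms by (simp add: pc_def)
qed

lemma piece_diff_le:
  assumes sum: "sum_list ts = 1" and k: "k \<le> l" "l < length ts"
    and p: "p \<in> piece ts k" and q: "q \<in> piece ts l" and z: "p - q = of_int z"
  shows "z = 0 \<or> (\<exists>t\<in>set ts. \<bar>z\<bar> = \<bar>t\<bar>)"
proof -
  define n where "n = length ts"
  have n0: "n > 0" using k n_def by auto
  obtain x where x: "x \<in> {real k / real n .. real (Suc k) / real n}" "p = x + of_int (pc ts k)"
    using p unfolding piece_def n_def by blast
  obtain y where y: "y \<in> {real l / real n .. real (Suc l) / real n}" "q = y + of_int (pc ts l)"
    using q unfolding piece_def n_def by blast
  define m where "m = z - pc ts k + pc ts l"
  have xy: "x - y = of_int m" using x y z by (simp add: m_def)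
  have nx: "real k \<le> real n * x" "real n * x \<le> real k + 1"
    using x n0 by (auto simp: field_simps)
  have ny: "real l \<le> real n * y" "real n * y \<le> real l + 1"
    using y n0 by (auto simp: field_simps)
  have "real n * (x - y) = real n * of_int m" using xy by simp
  then have "of_int (int n * m) = real n * x - real n * y" by (simp add: algebra_simps)
  then have lo: "int n * m \<ge> int k - int l - 1" and hi: "int n * m \<le> int k - int l + 1"
    using nx ny by linarith+
  show ?thesis
  proof (cases "k = l")
    case True
    then have "\<bar>int n * m\<bar> \<le> 1" using lo hi by auto
    show ?thesis
    proof (cases "n = 1")
      case True
      then have "length ts = Suc 0" using n_def by simp
      then obtain t where ts: "ts = [t]" by (auto simp: length_Suc_conv)
      with sum have "t = 1" by simp
      have "\<bar>m\<bar> \<le> 1" using \<open>\<bar>int n * m\<bar> \<le> 1\<close> True by simp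
      moreover have "z = m" using \<open>k = l\<close> m_def by simp
      ultimately show ?thesis using ts \<open>t = 1\<close> by auto
    next
      case False
      then have "n \<ge> 2" using n0 by auto
      have "m = 0"
      proof (rule ccontr)
        assume "m \<noteq> 0"
        then have "\<bar>m\<bar> \<ge> 1" by simp
        have "\<bar>int n * m\<bar> = int n * \<bar>m\<bar>" by (simp add: abs_mult)
        moreover have "int n * \<bar>m\<bar> \<ge> 2 * 1" using \<open>n \<ge> 2\<close> \<open>\<bar>m\<bar> \<ge> 1\<close>
          by (intro mult_mono) auto
        ultimately have "\<bar>int n * m\<bar> \<ge> 2" by simp
        then show False using \<open>\<bar>int n * m\<bar> \<le> 1\<close> by simp
      qed
      then show ?thesis using True m_def by simp
    qed
  next
    case False
    then have kl: "k < l" using k by simp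
    have "m \<le> 0"
    proof (rule ccontr)
      assume "\<not> m \<le> 0"
      then have "int n * m \<ge> int n" using n0 by simp
      then show False using hi kl k n_def by linarith
    qed
    moreover have "m \<ge> -1"
    proof (rule ccontr)
      assume "\<not> m \<ge> -1"
      then have "m \<le> -2" by simp
      then have "int n * m \<le> int n * (-2)" using n0 mult_left_mono[of m "-2" "int n"] by simp
      then show False using lo kl k n_def by linarith
    qed
    ultimately have "m = 0 \<or> m = -1" by auto
    then show ?thesis
    proof
      assume "m = 0"
      then have "l = Suc k" using hi kl by simp
      then have "z = ts ! k" using m_def \<open>m = 0\<close> pc_step[of k ts] k by simp
      then show ?thesis using k \<open>l = Suc k\<close> by auto
    next
      assume "m = -1"
      then have "k = 0" "l = n - 1" using lo kl k n_def by auto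
      then have "pc ts k = 0" by (simp add: pc_def)
      obtain mm where "n = Suc mm" using n0 not0_implies_Suc by blast
      then have "1 + pc ts mm = ts ! mm" using pc_last[OF sum] n_def by simp
      then have "z = - (ts ! mm)" using m_def \<open>m = -1\<close> \<open>pc ts k = 0\<close> \<open>l = n - 1\<close> \<open>n = Suc mm\<close> by simp
      moreover have "ts ! mm \<in> set ts" using \<open>n = Suc mm\<close> n_def by simp
      ultimately show ?thesis by auto
    qed
  qed
qed

lemma piece_diff:
  assumes sum: "sum_list ts = 1" and k: "k < length ts" "l < length ts"
    and p: "p \<in> piece ts k" and q: "q \<in> piece ts l" and z: "p - q = of_int z"
  shows "z = 0 \<or> (\<exists>t\<in>set ts. \<bar>z\<bar> = \<bar>t\<bar>)"
proof (cases "k \<le> l")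
  case True
  then show ?thesis using piece_diff_le[OF sum True k(2) p q z] by blast
next
  case False
  have "q - p = of_int (- z)" using z by simp
  then have "- z = 0 \<or> (\<exists>t\<in>set ts. \<bar>- z\<bar> = \<bar>t\<bar>)"
    using piece_diff_le[OF sum _ k(1) q p \<open>q - p = of_int (- z)\<close>] False by simp
  then show ?thesis by simp
qed

definition K0 :: "int list \<Rightarrow> real set" where
  "K0 ts = (\<Union>k<length ts. piece ts k)"

lemma K0_memI: "k < length ts \<Longrightarrow> x \<in> piece ts k \<Longrightarrow> x \<in> K0 ts"
  unfolding K0_def by blast

lemma K0_diff:
  assumes sum: "sum_list ts = 1" and p: "p \<in> K0 ts" and q: "q \<in> K0 ts" and z: "p - q = of_int z"
  shows "z = 0 \<or> (\<exists>t\<in>set ts. \<bar>z\<bar> = \<bar>t\<bar>)"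
  using p q piece_diff[OF sum _ _ _ _ z] unfolding K0_def by blast

lemma piece_compact: "compact (piece ts k)"
  unfolding piece_def by (intro compact_continuous_image continuous_intros) auto

lemma piece_connected: "connected (piece ts k)"
  unfolding piece_def by (intro connected_continuous_image continuous_intros) auto

lemma piece_mem:
  assumes "real k / real (length ts) \<le> v" "v \<le> real (Suc k) / real (length ts)"
  shows "v + of_int (pc ts k) \<in> piece ts k"
  using assms unfolding piece_def by auto

lemma piece_nonempty: "length ts > 0 \<Longrightarrow> piece ts k \<noteq> {}"
  using piece_mem[of k ts "real k / real (length ts)"] by (auto simp: divide_right_mono)

lemma K0_compact: "compact (K0 ts)"
  unfolding K0_def by (intro compact_UN piece_compact) auto

lemma K0_cover:
  assumes n0: "length ts > 0"
  shows "\<exists>y\<in>K0 ts. x - y \<in> \<int>"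
proof -
  define n where "n = length ts"
  define f where "f = x - of_int \<lfloor>x\<rfloor>"
  have f: "0 \<le> f" "f < 1" unfolding f_def by linarith+
  define k where "k = nat \<lfloor>real n * f\<rfloor>"
  have nf0: "0 \<le> real n * f" using f by simp
  have "real n * f < real n" using f n0 n_def by simp
  then have "\<lfloor>real n * f\<rfloor> < int n" by (simp add: floor_less_iff)
  then have kn: "k < n" unfolding k_def using nf0 by linarith
  have kf: "real k \<le> real n * f" "real n * f < real k + 1"
    unfolding k_def using nf0 by linarith+
  have np: "real n > 0" using n0 n_def by simp
  have "real k / real n \<le> f" "f \<le> real (Suc k) / real n"
    using kf np by (auto simp: field_simps)
  then have "f + of_int (pc ts k) \<in> piece ts k" using piece_mem n_def by blast
  then have "f + of_int (pc ts k) \<in> K0 ts" using kn n_def unfolding K0_def by blast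
  moreover have "x - (f + of_int (pc ts k)) \<in> \<int>"
    unfolding f_def by simp
  ultimately show ?thesis by blast
qed

lemma K0_realize:
  assumes sum: "sum_list ts = 1" and t: "t \<in> set ts"
  shows "\<exists>p\<in>K0 ts. \<exists>q\<in>K0 ts. p - q = of_int \<bar>t\<bar>"
proof -
  define n where "n = length ts"
  obtain j where j: "j < n" "t = ts ! j" using t n_def by (metis in_set_conv_nth)
  have np: "real n > 0" using j by simp
  have "\<exists>p\<in>K0 ts. \<exists>q\<in>K0 ts. p - q = of_int t"
  proof (cases "Suc j < n")
    case True
    define v where "v = real (Suc j) / real n"
    have "v + of_int (pc ts j) \<in> piece ts j"
      using piece_mem[of j ts v] np n_def v_def by (auto simp: divide_right_mono)
    moreover have "v + of_int (pc ts (Suc j)) \<in> piece ts (Suc j)"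
      using piece_mem[of "Suc j" ts v] np n_def v_def by (auto simp: divide_right_mono)
    moreover have "(v + of_int (pc ts j)) - (v + of_int (pc ts (Suc j))) = of_int t"
      using pc_step[of j ts] j n_def by simp
    ultimately show ?thesis using True j n_def K0_memI[of j ts] K0_memI[of "Suc j" ts]
      by (intro bexI[of _ "v + of_int (pc ts j)"] bexI[of _ "v + of_int (pc ts (Suc j))"]) auto
  next
    case False
    then have jn: "n = Suc j" using j by simp
    have "1 + of_int (pc ts j) \<in> piece ts j"
      using piece_mem[of j ts 1] np n_def jn by auto
    moreover have "0 + of_int (pc ts 0) \<in> piece ts 0"
      using piece_mem[of 0 ts 0] np n_def by auto
    moreover have "(1 + of_int (pc ts j)) - (0 + of_int (pc ts 0)) = (of_int t :: real)"
      using pc_last[OF sum, of j] jn n_def j by (simp add: pc_def flip: of_int_add)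
    ultimately show ?thesis using jn j n_def K0_memI[of j ts] K0_memI[of 0 ts]
      by (intro bexI[of _ "1 + of_int (pc ts j)"] bexI[of _ "0 + of_int (pc ts 0)"]) auto
  qed
  then obtain p q where pq: "p \<in> K0 ts" "q \<in> K0 ts" "p - q = of_int t" by blast
  show ?thesis
  proof (cases "t \<ge> 0")
    case True then show ?thesis using pq by auto
  next
    case False
    then have "q - p = of_int \<bar>t\<bar>" using pq by simp
    then show ?thesis using pq by blast
  qed
qed

lemma K0_special:
  assumes n0: "length ts > 0" and r: "0 < r" "r < 1 / real (length ts)"
  shows "r \<in> K0 ts" and "\<And>p. p \<in> K0 ts \<Longrightarrow> p - r \<in> \<int> \<Longrightarrow> p = r"
proof -
  define n where "n = length ts"
  have np: "real n > 0" using n0 n_def by simp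
  have "r + of_int (pc ts 0) \<in> piece ts 0"
    using piece_mem[of 0 ts r] r by auto
  then show "r \<in> K0 ts" using n0 unfolding K0_def by (auto simp: pc_def)
  fix p assume p: "p \<in> K0 ts" "p - r \<in> \<int>"
  then obtain k where k: "k < n" "p \<in> piece ts k" unfolding K0_def n_def by blast
  then obtain y where y: "y \<in> {real k / real n .. real (Suc k) / real n}" "p = y + of_int (pc ts k)"
    unfolding piece_def n_def by blast
  have A: "real k \<le> y * real n" "y * real n \<le> real k + 1" using y np by (auto simp: field_simps)
  have "0 \<le> y * real n" using A by linarith
  then have y0: "0 \<le> y" using np by (simp add: zero_le_mult_iff)
  have "real k + 1 \<le> real n" using k(1) by (metis Suc_leI of_nat_Suc of_nat_le_iff add.commute)
  then have "y * real n \<le> 1 * real n" using A by linarith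
  then have "y \<le> 1" using np by (simp only: mult_le_cancel_right_pos)
  note y01 = y0 this
  have "n \<ge> 1" using n0 n_def by linarith
  then have "real n \<ge> 1" by simp
  then have "1 / real n \<le> 1" by simp
  then have r1: "r < 1" using r(2) unfolding n_def by linarith
  have eqy: "y - r = (p - r) - of_int (pc ts k)" using y(2) by simp
  have memy: "(p - r) - of_int (pc ts k) \<in> \<int>" by (rule Ints_diff[OF p(2) Ints_of_int])
  have "y - r \<in> \<int>" unfolding eqy by (rule memy)
  then obtain i where i: "y - r = of_int i" by (auto elim: Ints_cases)
  have "-1 < y - r" "y - r < 1" using y01 r r1 by linarith+
  then have "i = 0" using i by simp
  then have yr: "y = r" using i by simp
  have "real k / real n < 1 / real n" using y yr r n_def by auto
  then have "k = 0" using np by (simp add: divide_strict_right_mono_neg field_simps)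
  then show "p = r" using y yr by (simp add: pc_def)
qed


lemma sum_concat_rep:
  "sum_list (concat (map (\<lambda>a. replicate (w a) (f a)) xs)) = (\<Sum>a\<leftarrow>xs. int (w a) * (f a :: int))"
  by (induction xs) (auto simp: sum_list_replicate)

lemma rep_list:
  assumes "is_rep A S w e"
  shows "\<exists>ts. sum_list ts = 1 \<and> length ts = (\<Sum>a\<in>S. w a)
     \<and> (\<forall>t\<in>set ts. \<exists>a\<in>S. \<bar>t\<bar> = int a) \<and> (\<forall>a\<in>S. \<exists>t\<in>set ts. \<bar>t\<bar> = int a)"
proof -
  have S: "finite S" "\<forall>a\<in>S. w a \<ge> 1 \<and> e a \<in> {1, -1}"
     "(\<Sum>a\<in>S. e a * int (w a) * int a) = 1"
    using assms by (auto simp: is_rep_def)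
  obtain xs where xs: "distinct xs" "set xs = S" using S(1) finite_distinct_list by blast
  define ts where "ts = concat (map (\<lambda>a. replicate (w a) (e a * int a)) xs)"
  have "sum_list ts = (\<Sum>a\<leftarrow>xs. int (w a) * (e a * int a))"
    unfolding ts_def by (rule sum_concat_rep)
  also have "\<dots> = (\<Sum>a\<in>S. int (w a) * (e a * int a))"
    using sum.distinct_set_conv_list[OF xs(1), of "\<lambda>a. int (w a) * (e a * int a)"] xs by simp
  also have "\<dots> = (\<Sum>a\<in>S. e a * int (w a) * int a)"
    by (simp add: algebra_simps)
  finally have 1: "sum_list ts = 1" using S by simp
  have "length ts = (\<Sum>a\<leftarrow>xs. w a)"
    unfolding ts_def by (simp add: length_concat comp_def)
  also have "\<dots> = (\<Sum>a\<in>S. w a)"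
    using sum.distinct_set_conv_list[OF xs(1), of w] xs by simp
  finally have 2: "length ts = (\<Sum>a\<in>S. w a)" .
  have st: "set ts = (\<lambda>a. e a * int a) ` S"
    unfolding ts_def using S(2) xs(2) by fastforce
  have ea: "\<bar>e a * int a\<bar> = int a" if "a \<in> S" for a
    using S(2) that by (auto simp: abs_mult)
  show ?thesis using 1 2 st ea by (intro exI[of _ ts]) auto
qed

lemma int_small: "-1 < (of_int i :: real) \<Longrightarrow> of_int i < (1::real) \<Longrightarrow> i = 0"
  by simp

lemma construct:
  assumes rep: "is_rep A S w e" and fin: "finite A" and A0: "0 \<notin> A"
  shows "\<exists>K. N_set K \<and> A = pos_diffs K \<and> nset_weight K \<le> enat (rep_weight A S w)"
proof -
  obtain ts where ts: "sum_list ts = 1" "length ts = (\<Sum>a\<in>S. w a)"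
     "\<forall>t\<in>set ts. \<exists>a\<in>S. \<bar>t\<bar> = int a" "\<forall>a\<in>S. \<exists>t\<in>set ts. \<bar>t\<bar> = int a"
    using rep_list[OF rep] by blast
  have SA: "S \<subseteq> A" using rep by (simp add: is_rep_def)
  define n where "n = length ts"
  have n0: "n > 0" using ts(1) n_def by (cases ts) auto
  have np: "real n > 0" using n0 by simp
  define B where "B = A - S"
  define r where "r b = 1 / (real n * (real b + 2))" for b :: nat
  have r0: "0 < r b" for b using np by (simp add: r_def)
  have r1: "r b < 1 / real n" for b
  proof -
    have "1 / (real b + 2) < 1" by simp
    then have "(1 / real n) * (1 / (real b + 2)) < (1 / real n) * 1"
      using np by (intro mult_strict_left_mono) auto
    then show ?thesis by (simp add: r_def)
  qed
  have rlt1: "r b < 1" for b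
  proof -
    have "1 / real n \<le> 1" using n0 by simp
    then show ?thesis using r1[of b] by linarith
  qed
  have rinj: "r b = r b' \<Longrightarrow> b = b'" for b b'
    using np by (simp add: r_def)
  define P where "P = (\<lambda>b. r b + real b) ` B"
  define K where "K = K0 ts \<union> P"
  have finB: "finite B" using fin B_def by simp
  have sp1: "r b \<in> K0 ts" for b using K0_special(1)[of ts "r b"] n0 r0 r1 n_def by simp
  have sp2: "\<And>p. p \<in> K0 ts \<Longrightarrow> p - r b \<in> \<int> \<Longrightarrow> p = r b" for b
    using K0_special(2)[of ts "r b"] n0 r0 r1 n_def by simp
  have NK: "N_set K"
    unfolding N_set_def K_def
  proof
    show "compact (K0 ts \<union> P)" using finB unfolding P_def
      by (intro compact_Un[OF K0_compact] finite_imp_compact) auto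
    show "\<forall>x. \<exists>y\<in>K0 ts \<union> P. x - y \<in> \<int>"
    proof
      fix x
      have "length ts > 0" using n0 n_def by simp
      then obtain y where "y \<in> K0 ts" "x - y \<in> \<int>" using K0_cover by blast
      then show "\<exists>y\<in>K0 ts \<union> P. x - y \<in> \<int>" by blast
    qed
  qed
  have PD: "A = pos_diffs K"
  proof
    show "A \<subseteq> pos_diffs K"
    proof
      fix a assume aA: "a \<in> A"
      then have apos: "a > 0" using A0 by (cases a) auto
      show "a \<in> pos_diffs K"
      proof (cases "a \<in> S")
        case True
        then obtain t where t: "t \<in> set ts" "\<bar>t\<bar> = int a" using ts(4) by blast
        then obtain p q where "p \<in> K0 ts" "q \<in> K0 ts" "p - q = of_int \<bar>t\<bar>"
          using K0_realize[OF ts(1)] by blast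
        then have "\<exists>x\<in>K. \<exists>y\<in>K. x - y = real a" using t unfolding K_def by force
        then show ?thesis using apos by (simp add: pos_diffs_def)
      next
        case False
        then have "a \<in> B" using aA B_def by simp
        then have "r a + real a \<in> K" unfolding K_def P_def by blast
        moreover have "r a \<in> K" using sp1 K_def by blast
        moreover have "(r a + real a) - r a = real a" by simp
        ultimately have "\<exists>x\<in>K. \<exists>y\<in>K. x - y = real a" by blast
        then show ?thesis using apos by (simp add: pos_diffs_def)
      qed
    qed
    show "pos_diffs K \<subseteq> A"
    proof
      fix m assume "m \<in> pos_diffs K"
      then have "m > 0 \<and> (\<exists>x\<in>K. \<exists>y\<in>K. x - y = real m)" by (simp add: pos_diffs_def)
      then obtain x y where m: "m > 0" "x \<in> K" "y \<in> K" "x - y = real m"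
        by auto
      show "m \<in> A"
      proof (cases "x \<in> K0 ts")
        case xK: True
        show ?thesis
        proof (cases "y \<in> K0 ts")
          case True
          have "x - y = of_int (int m)" using m by simp
          then have "int m = 0 \<or> (\<exists>t\<in>set ts. \<bar>int m\<bar> = \<bar>t\<bar>)"
            using K0_diff[OF ts(1) xK True] by blast
          then obtain t where "t \<in> set ts" "int m = \<bar>t\<bar>" using m by auto
          then obtain a where "a \<in> S" "int m = int a" using ts(3) by force
          then show ?thesis using SA by auto
        next
          case False
          then obtain b where b: "b \<in> B" "y = r b + real b" using m K_def P_def by blast
          have "x - r b = real m + real b" using m b by simp
          then have "x - r b \<in> \<int>" by (metis Ints_of_nat of_nat_add)
          then have "x = r b" using sp2 xK by blast
          then show ?thesis using m b by simp
        qed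
      next
        case False
        then obtain b where b: "b \<in> B" "x = r b + real b" using m K_def P_def by blast
        show ?thesis
        proof (cases "y \<in> K0 ts")
          case True
          have "y - r b = real b - real m" using m b by simp
          then have "y - r b \<in> \<int>" by (metis Ints_of_nat Ints_diff)
          then have "y = r b" using sp2 True by blast
          then have "m = b" using m b by simp
          then show ?thesis using b B_def by simp
        next
          case False
          then obtain b' where b': "b' \<in> B" "y = r b' + real b'" using m K_def P_def by blast
          have "r b - r b' = real m - real b + real b'" using m b b' by simp
          then have "r b - r b' \<in> \<int>" by (metis Ints_of_nat Ints_diff Ints_add)
          then obtain i where i: "r b - r b' = of_int i" by (auto elim: Ints_cases)
          have "-1 < r b - r b'" "r b - r b' < 1" using r0[of b] r0[of b'] rlt1[of b] rlt1[of b'] by linarith+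
          then have "i = 0" using i int_small by metis
          then have "b = b'" using i rinj by simp
          then show ?thesis using m b b' by simp
        qed
      qed
    qed
  qed
  define F where "F = piece ts ` {..<n} \<union> (\<lambda>b. {r b + real b}) ` B"
  have KF: "K = \<Union>F"
  proof -
    have "\<Union>F = (\<Union>(piece ts ` {..<n})) \<union> (\<Union>((\<lambda>b. {r b + real b}) ` B))"
      unfolding F_def by (rule Union_Un_distrib)
    also have "\<Union>((\<lambda>b. {r b + real b}) ` B) = P" unfolding P_def by blast
    finally show ?thesis unfolding K_def K0_def n_def by simp
  qed
  have finF: "finite F" unfolding F_def using finB by simp
  have cF: "\<And>C. C \<in> F \<Longrightarrow> connected C \<and> C \<noteq> {}"
    unfolding F_def using piece_connected piece_nonempty n0 n_def by auto
  have cardF: "card F \<le> n + card B"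
  proof -
    have "card F \<le> card (piece ts ` {..<n}) + card ((\<lambda>b. {r b + real b}) ` B)"
      unfolding F_def by (rule card_Un_le)
    also have "\<dots> \<le> n + card B"
    proof (rule add_mono)
      show "card (piece ts ` {..<n}) \<le> n" using card_image_le[of "{..<n}" "piece ts"] by simp
      show "card ((\<lambda>b. {r b + real b}) ` B) \<le> card B" using card_image_le[OF finB] by blast
    qed
    finally show ?thesis .
  qed
  have comp: "finite (components K)" "card (components K) \<le> card F"
    using components_card_le[OF finF cF KF] by auto
  have "card S \<le> card A" using SA fin card_mono by blast
  then have "rep_weight A S w = n + card B"
    unfolding rep_weight_def B_def using ts(2) n_def card_Diff_subset[OF finite_subset[OF SA fin] SA] by simp
  then have "nset_weight K \<le> enat (rep_weight A S w)"
    unfolding nset_weight_def using comp cardF by simp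
  then show ?thesis using NK PD by (intro exI[of _ K] conjI) auto
qed

theorem mainTheorem5:
  fixes A :: "nat set"
  assumes "finite A" and "0 \<notin> A" and "rel_prime_set A"
  shows "Geo A \<le> Add A"
  unfolding Add_def
proof (rule INF_greatest)
  fix p assume "p \<in> {(S, w, e). is_rep A S w e}"
  then obtain S w e where p: "p = (S, w, e)" "is_rep A S w e" by auto
  obtain K where K: "N_set K" "A = pos_diffs K" "nset_weight K \<le> enat (rep_weight A S w)"
    using construct[OF p(2) assms(1,2)] by blast
  have "Geo A \<le> nset_weight K" unfolding Geo_def using K by (intro INF_lower) auto
  then show "Geo A \<le> enat (rep_weight A (fst p) (fst (snd p)))" using K p by simp
qed

end
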